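(* Let $p$ be a prime and let $P$ be a nonabelian finite $p$-group on which there exists a transitive saturated fusion system. Then $P$ is indecomposable as a direct product, i.e. $P$ is not the direct product of two nontrivial subgroups.
   Context: A saturated fusion system $\mathcal{F}$ on a finite $p$-group $P$ is called transitive if any two nontrivial elements of $P$ are $\mathcal{F}$-conjugate. *)

theory Defs
  imports "HOL-Algebra.Algebra" "HOL-Library.FuncSet" "HOL-Computational_Algebra.Primes"
begin

definition p_group :: "nat \<Rightarrow> ('a, 'b) monoid_scheme \<Rightarrow> bool" where
  "p_group p G \<longleftrightarrow> group G \<and> finite (carrier G) \<and> (\<exists>n. card (carrier G) = p ^ n)"

definition centralizer_set :: "('a, 'b) monoid_scheme \<Rightarrow> 'a set \<Rightarrow> 'a set" where
  "centralizer_set G H = {g \<in> carrier G. \<forall>x\<in>H. g \<otimes>\<^bsub>G\<^esub> x = x \<otimes>\<^bsub>G\<^esub> g}"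

definition conjmap :: "('a, 'b) monoid_scheme \<Rightarrow> 'a \<Rightarrow> 'a set \<Rightarrow> ('a \<Rightarrow> 'a)" where
  "conjmap G s P = (\<lambda>x\<in>P. s \<otimes>\<^bsub>G\<^esub> x \<otimes>\<^bsub>G\<^esub> inv\<^bsub>G\<^esub> s)"

definition HomS :: "('a, 'b) monoid_scheme \<Rightarrow> 'a set \<Rightarrow> 'a set \<Rightarrow> ('a \<Rightarrow> 'a) set" where
  "HomS G P Q = {conjmap G s P | s. s \<in> carrier G \<and>
                    (\<forall>x\<in>P. s \<otimes>\<^bsub>G\<^esub> x \<otimes>\<^bsub>G\<^esub> inv\<^bsub>G\<^esub> s \<in> Q)}"

definition InjHom :: "('a, 'b) monoid_scheme \<Rightarrow> 'a set \<Rightarrow> 'a set \<Rightarrow> ('a \<Rightarrow> 'a) set" where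
  "InjHom G P Q = {\<phi>. \<phi> \<in> hom (G\<lparr>carrier := P\<rparr>) (G\<lparr>carrier := Q\<rparr>) \<and> inj_on \<phi> P \<and> \<phi> \<in> extensional P}"

text \<open>A fusion system on the finite p-group G (= S): for every pair of subgroups
  P, Q a set F P Q of injective homomorphisms P -> Q, containing Hom_S(P,Q),
  closed under composition, and such that each morphism is the composite of an
  F-isomorphism and an inclusion (the corestriction to its image and its inverse
  are in F).\<close>

definition fusion_system :: "('a, 'b) monoid_scheme \<Rightarrow> ('a set \<Rightarrow> 'a set \<Rightarrow> ('a \<Rightarrow> 'a) set) \<Rightarrow> bool" where
  "fusion_system G F \<longleftrightarrow>
     (\<forall>P Q. \<not> (subgroup P G \<and> subgroup Q G) \<longrightarrow> F P Q = {}) \<and>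
     (\<forall>P Q. subgroup P G \<and> subgroup Q G \<longrightarrow>
         F P Q \<subseteq> InjHom G P Q \<and> HomS G P Q \<subseteq> F P Q \<and>
         (\<forall>\<phi>\<in>F P Q. \<phi> \<in> F P (\<phi> ` P) \<and> restrict (inv_into P \<phi>) (\<phi> ` P) \<in> F (\<phi> ` P) P)) \<and>
     (\<forall>P Q R \<phi> \<psi>. \<phi> \<in> F P Q \<longrightarrow> \<psi> \<in> F Q R \<longrightarrow> compose P \<psi> \<phi> \<in> F P R)"

definition F_conj_subgroups :: "('a set \<Rightarrow> 'a set \<Rightarrow> ('a \<Rightarrow> 'a) set) \<Rightarrow> 'a set \<Rightarrow> 'a set \<Rightarrow> bool" where
  "F_conj_subgroups F P Q \<longleftrightarrow> (\<exists>\<phi>\<in>F P Q. \<phi> ` P = Q)"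

definition fully_normalized :: "('a, 'b) monoid_scheme \<Rightarrow> ('a set \<Rightarrow> 'a set \<Rightarrow> ('a \<Rightarrow> 'a) set) \<Rightarrow> 'a set \<Rightarrow> bool" where
  "fully_normalized G F P \<longleftrightarrow> subgroup P G \<and>
     (\<forall>Q. F_conj_subgroups F P Q \<longrightarrow> card (normalizer G Q) \<le> card (normalizer G P))"

definition fully_centralized :: "('a, 'b) monoid_scheme \<Rightarrow> ('a set \<Rightarrow> 'a set \<Rightarrow> ('a \<Rightarrow> 'a) set) \<Rightarrow> 'a set \<Rightarrow> bool" where
  "fully_centralized G F P \<longleftrightarrow> subgroup P G \<and>
     (\<forall>Q. F_conj_subgroups F P Q \<longrightarrow> card (centralizer_set G Q) \<le> card (centralizer_set G P))"

definition N_phi :: "('a, 'b) monoid_scheme \<Rightarrow> 'a set \<Rightarrow> ('a \<Rightarrow> 'a) \<Rightarrow> 'a set" where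
  "N_phi G P \<phi> = {g \<in> normalizer G P. \<exists>h\<in>normalizer G (\<phi> ` P).
      \<forall>x\<in>P. \<phi> (g \<otimes>\<^bsub>G\<^esub> x \<otimes>\<^bsub>G\<^esub> inv\<^bsub>G\<^esub> g) = h \<otimes>\<^bsub>G\<^esub> \<phi> x \<otimes>\<^bsub>G\<^esub> inv\<^bsub>G\<^esub> h}"

text \<open>Saturation (Broto-Levi-Oliver).  Aut_S(P) = HomS G P P is a Sylow p-subgroup
  of Aut_F(P) = F P P, i.e. its order is the full p-part of the order of Aut_F(P).\<close>

definition saturated :: "nat \<Rightarrow> ('a, 'b) monoid_scheme \<Rightarrow> ('a set \<Rightarrow> 'a set \<Rightarrow> ('a \<Rightarrow> 'a) set) \<Rightarrow> bool" where
  "saturated p G F \<longleftrightarrow> fusion_system G F \<and>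
     (\<forall>P. fully_normalized G F P \<longrightarrow>
          fully_centralized G F P \<and>
          card (HomS G P P) = p ^ multiplicity p (card (F P P))) \<and>
     (\<forall>P \<phi>. subgroup P G \<longrightarrow> \<phi> \<in> F P (carrier G) \<longrightarrow> fully_centralized G F (\<phi> ` P) \<longrightarrow>
          (\<exists>\<psi>\<in>F (N_phi G P \<phi>) (carrier G). \<forall>x\<in>P. \<psi> x = \<phi> x))"

definition transitive_fusion :: "('a, 'b) monoid_scheme \<Rightarrow> ('a set \<Rightarrow> 'a set \<Rightarrow> ('a \<Rightarrow> 'a) set) \<Rightarrow> bool" where
  "transitive_fusion G F \<longleftrightarrow>
     (\<forall>x\<in>carrier G. \<forall>y\<in>carrier G. x \<noteq> \<one>\<^bsub>G\<^esub> \<longrightarrow> y \<noteq> \<one>\<^bsub>G\<^esub> \<longrightarrow>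
        (\<exists>\<phi>\<in>F (generate G {x}) (carrier G). \<phi> x = y))"

definition nontrivially_decomposable :: "('a, 'b) monoid_scheme \<Rightarrow> bool" where
  "nontrivially_decomposable G \<longleftrightarrow>
     (\<exists>H K. H \<lhd> G \<and> K \<lhd> G \<and> H \<noteq> {\<one>\<^bsub>G\<^esub>} \<and> K \<noteq> {\<one>\<^bsub>G\<^esub>} \<and>
            H \<inter> K = {\<one>\<^bsub>G\<^esub>} \<and> H <#>\<^bsub>G\<^esub> K = carrier G)"

end

theory Submission
  imports Defs
begin

definition cent :: "('a, 'b) monoid_scheme \<Rightarrow> 'a \<Rightarrow> bool" where
  "cent G x \<longleftrightarrow> x \<in> carrier G \<and> (\<forall>g\<in>carrier G. g \<otimes>\<^bsub>G\<^esub> x = x \<otimes>\<^bsub>G\<^esub> g)"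

lemma (in group) cent_conj:
  assumes "cent G x" "g \<in> carrier G"
  shows "g \<otimes> x \<otimes> inv g = x"
proof -
  have x: "x \<in> carrier G" and gx: "g \<otimes> x = x \<otimes> g" using assms unfolding cent_def by auto
  have "g \<otimes> x \<otimes> inv g = x \<otimes> g \<otimes> inv g" by (simp only: gx)
  also have "\<dots> = x" using x assms(2) by (simp add: m_assoc)
  finally show ?thesis .
qed

lemma (in group) conj_inv_conj:
  assumes "g \<in> carrier G" "x \<in> carrier G"
  shows "inv g \<otimes> (g \<otimes> x \<otimes> inv g) \<otimes> inv (inv g) = x"
  using assms by (simp add: m_assoc) (simp add: m_assoc [symmetric])

lemma (in group) conj_orbit_mod:
  assumes fin: "finite (carrier G)" and pr: "Factorial_Ring.prime (p::nat)" and ord: "order G = p ^ n"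
    and S: "S \<subseteq> carrier G" and Scl: "\<And>g s. g \<in> carrier G \<Longrightarrow> s \<in> S \<Longrightarrow> g \<otimes> s \<otimes> inv g \<in> S"
  shows "card S mod p = card {s\<in>S. cent G s} mod p"
proof -
  let ?phi = "\<lambda>g. (\<lambda>h \<in> carrier G. g \<otimes> h \<otimes> (inv g))"
  interpret A: group_action G "carrier G" ?phi by (rule action_by_conjugation)
  define f1 where "f1 = (\<lambda>x. if x \<in> S then 1 else (0::nat))"
  define f2 where "f2 = (\<lambda>x. if x \<in> S \<and> cent G x then 1 else (0::nat))"
  have c1: "card S = (\<Sum>x\<in>carrier G. f1 x)"
    unfolding f1_def using S fin by (simp add: sum.If_cases Int_absorb1)
  have c2: "card {s\<in>S. cent G s} = (\<Sum>x\<in>carrier G. f2 x)"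
  proof -
    have "carrier G \<inter> {x. x \<in> S \<and> cent G x} = {s\<in>S. cent G s}" using S by auto
    then show ?thesis unfolding f2_def using fin by (simp add: sum.If_cases)
  qed
  have orb: "(\<Sum>x\<in>orb. f1 x) mod p = (\<Sum>x\<in>orb. f2 x) mod p" if orbin: "orb \<in> orbits G (carrier G) ?phi" for orb
  proof -
    obtain x where x: "x \<in> carrier G" and orbx: "orb = orbit G ?phi x"
      using orbin unfolding orbits_def by blast
    have mem: "y \<in> orb \<longleftrightarrow> (\<exists>g\<in>carrier G. y = g \<otimes> x \<otimes> inv g)" for y
      unfolding orbx orbit_def using x by (simp add: restrict_def) blast
    have xin: "x \<in> orb" using mem[of x] x by (intro iffD2[OF mem[of x]] bexI[of _ \<one>]) simp_all
    show ?thesis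
    proof (cases "x \<in> S")
      case False
      have "y \<notin> S" if yo: "y \<in> orb" for y
      proof
        assume yS: "y \<in> S"
        obtain g where g: "g \<in> carrier G" "y = g \<otimes> x \<otimes> inv g" using mem yo by blast
        have "inv g \<otimes> y \<otimes> inv (inv g) \<in> S" using Scl[OF inv_closed[OF g(1)] yS] .
        also have "inv g \<otimes> y \<otimes> inv (inv g) = x" using conj_inv_conj[OF g(1) x] g(2) by simp
        finally show False using False by simp
      qed
      then show ?thesis unfolding f1_def f2_def by simp
    next
      case True
      have allS: "y \<in> S" if yo: "y \<in> orb" for y using mem[of y] yo True Scl by auto
      have s1: "(\<Sum>x\<in>orb. f1 x) = card orb" unfolding f1_def using allS by simp
      show ?thesis
      proof (cases "cent G x")
        case True
        have "orb = {x}"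
        proof -
          have "y = x" if yo: "y \<in> orb" for y
          proof -
            obtain g where g: "g \<in> carrier G" "y = g \<otimes> x \<otimes> inv g" using mem yo by blast
            then show ?thesis using cent_conj[OF True g(1)] by simp
          qed
          then show ?thesis using xin by blast
        qed
        then show ?thesis unfolding f1_def f2_def using True \<open>x \<in> S\<close> by simp
      next
        case False
        have nc: "\<not> cent G y" if yo: "y \<in> orb" for y
        proof
          assume cy: "cent G y"
          obtain g where g: "g \<in> carrier G" "y = g \<otimes> x \<otimes> inv g" using mem yo by blast
          have yc: "y \<in> carrier G" using g x by simp
          have "x = inv g \<otimes> y \<otimes> inv (inv g)" using conj_inv_conj[OF g(1) x] g(2) by simp
          also have "\<dots> = y" using cent_conj[OF cy inv_closed[OF g(1)]] .
          finally show False using cy False by simp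
        qed
        have s2: "(\<Sum>x\<in>orb. f2 x) = 0" unfolding f2_def using nc by simp
        obtain g where g: "g \<in> carrier G" "g \<otimes> x \<noteq> x \<otimes> g" using False x unfolding cent_def by blast
        have "g \<otimes> x \<otimes> inv g \<noteq> x"
        proof
          assume "g \<otimes> x \<otimes> inv g = x"
          then have "g \<otimes> x \<otimes> inv g \<otimes> g = x \<otimes> g" by simp
          then show False using g x by (simp add: m_assoc)
        qed
        moreover have "g \<otimes> x \<otimes> inv g \<in> orb" using mem g by blast
        ultimately have "card orb \<noteq> 1" using xin by (auto simp: card_1_singleton_iff)
        moreover have "card orb dvd p ^ n"
          using A.orbit_stabilizer_theorem[OF x] ord orbx by (simp add: dvd_def) (metis)
        ultimately obtain i where "card orb = p ^ i" "i \<noteq> 0"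
          using divides_primepow_nat[OF pr, of "card orb" n] by fastforce
        then have "p dvd card orb" by (simp add: dvd_power)
        then show ?thesis using s1 s2 by simp
      qed
    qed
  qed
  have "card S mod p = (\<Sum>orb\<in>orbits G (carrier G) ?phi. \<Sum>x\<in>orb. f1 x) mod p"
    using c1 A.disjoint_sum[OF fin, of f1] by (simp only:)
  also have "\<dots> = (\<Sum>orb\<in>orbits G (carrier G) ?phi. (\<Sum>x\<in>orb. f1 x) mod p) mod p"
    by (simp add: mod_sum_eq)
  also have "\<dots> = (\<Sum>orb\<in>orbits G (carrier G) ?phi. (\<Sum>x\<in>orb. f2 x) mod p) mod p"
    by (rule arg_cong[where f="\<lambda>x. x mod p"], rule sum.cong[OF refl], rule orb)
  also have "\<dots> = (\<Sum>orb\<in>orbits G (carrier G) ?phi. \<Sum>x\<in>orb. f2 x) mod p"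
    by (simp add: mod_sum_eq)
  also have "\<dots> = card {s\<in>S. cent G s} mod p"
    using c2 A.disjoint_sum[OF fin, of f2] by (simp only:)
  finally show ?thesis .
qed

lemma (in group) normal_meets_center:
  assumes fin: "finite (carrier G)" and pr: "Factorial_Ring.prime (p::nat)" and ord: "order G = p ^ n"
    and K: "K \<lhd> G" and Kn: "K \<noteq> {\<one>}"
  shows "\<exists>k\<in>K. k \<noteq> \<one> \<and> cent G k"
proof -
  have sg: "subgroup K G" using K normal_imp_subgroup by blast
  have Ksub: "K \<subseteq> carrier G" using sg subgroup.subset by blast
  have finK: "finite K" using fin Ksub finite_subset by blast
  have one: "\<one> \<in> K" using sg subgroup.one_closed by blast
  have "card K dvd p ^ n" using lagrange[OF sg] ord unfolding dvd_def by (metis mult.commute)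
  then obtain i where i: "card K = p ^ i" using divides_primepow_nat[OF pr] by blast
  have "card K \<noteq> 1"
  proof
    assume "card K = 1"
    then obtain a where "K = {a}" using card_1_singletonE by blast
    then show False using one Kn by blast
  qed
  then have "i \<noteq> 0" using i by auto
  then have "p dvd card K" using i by (simp add: dvd_power)
  moreover have "card K mod p = card {s\<in>K. cent G s} mod p"
    using conj_orbit_mod[OF fin pr ord Ksub] K by (simp add: normal_inv_iff)
  ultimately have pd: "p dvd card {s\<in>K. cent G s}" by (simp add: mod_eq_0_iff_dvd)
  have c1: "cent G \<one>" unfolding cent_def by simp
  have fin2: "finite {s\<in>K. cent G s}" using finK by simp
  have "card {s\<in>K. cent G s} \<noteq> 0" using fin2 one c1 by auto
  with pd have "card {s\<in>K. cent G s} \<ge> p" by (simp add: dvd_imp_le)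
  moreover have "p \<ge> 2" using pr prime_ge_2_nat by blast
  ultimately have "card {s\<in>K. cent G s} \<ge> 2" by linarith
  show ?thesis
  proof (rule ccontr)
    assume "\<not> ?thesis"
    then have "{s\<in>K. cent G s} \<subseteq> {\<one>}" by auto
    then have "card {s\<in>K. cent G s} \<le> card {\<one>}" by (intro card_mono) auto
    then have "card {s\<in>K. cent G s} \<le> 1" by simp
    with \<open>card {s\<in>K. cent G s} \<ge> 2\<close> show False by linarith
  qed
qed

lemma (in group) center_normal: "{x. cent G x} \<lhd> G"
proof -
  have sg: "subgroup {x. cent G x} G"
  proof (rule subgroupI)
    show "{x. cent G x} \<subseteq> carrier G" unfolding cent_def by auto
    have "\<one> \<in> {x. cent G x}" by (simp add: cent_def)
    then show "{x. cent G x} \<noteq> {}" by blast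
    fix a assume a: "a \<in> {x. cent G x}"
    then have ac: "a \<in> carrier G" and acm: "\<And>g. g \<in> carrier G \<Longrightarrow> g \<otimes> a = a \<otimes> g" unfolding cent_def by auto
    show "inv a \<in> {x. cent G x}" unfolding cent_def
    proof (intro CollectI conjI ballI)
      show "inv a \<in> carrier G" using ac by simp
      fix g assume g: "g \<in> carrier G"
      have "inv a \<otimes> g = inv a \<otimes> g \<otimes> (a \<otimes> inv a)" using ac g by simp
      also have "\<dots> = inv a \<otimes> (g \<otimes> a) \<otimes> inv a" using ac g by (simp add: m_assoc)
      also have "\<dots> = inv a \<otimes> (a \<otimes> g) \<otimes> inv a" using acm[OF g] by simp
      also have "\<dots> = g \<otimes> inv a" using ac g by (simp add: m_assoc[symmetric])
      finally show "g \<otimes> inv a = inv a \<otimes> g" by simp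
    qed
  next
    fix a b assume a: "a \<in> {x. cent G x}" and b: "b \<in> {x. cent G x}"
    then have ac: "a \<in> carrier G" and acm: "\<And>g. g \<in> carrier G \<Longrightarrow> g \<otimes> a = a \<otimes> g"
      and bc: "b \<in> carrier G" and bcm: "\<And>g. g \<in> carrier G \<Longrightarrow> g \<otimes> b = b \<otimes> g" unfolding cent_def by auto
    show "a \<otimes> b \<in> {x. cent G x}" unfolding cent_def
    proof (intro CollectI conjI ballI)
      show "a \<otimes> b \<in> carrier G" using ac bc by simp
      fix g assume g: "g \<in> carrier G"
      have "g \<otimes> (a \<otimes> b) = (g \<otimes> a) \<otimes> b" using ac bc g by (simp add: m_assoc)
      also have "\<dots> = a \<otimes> (g \<otimes> b)" using acm[OF g] ac bc g by (simp add: m_assoc)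
      also have "\<dots> = a \<otimes> (b \<otimes> g)" using bcm[OF g] by simp
      also have "\<dots> = a \<otimes> b \<otimes> g" using ac bc g by (simp add: m_assoc)
      finally show "g \<otimes> (a \<otimes> b) = a \<otimes> b \<otimes> g" .
    qed
  qed
  show ?thesis unfolding normal_inv_iff
  proof (intro conjI ballI sg)
    fix x h assume x: "x \<in> carrier G" and h: "h \<in> {x. cent G x}"
    have "x \<otimes> h \<otimes> inv x = h" using cent_conj[of h x] h x by simp
    then show "x \<otimes> h \<otimes> inv x \<in> {x. cent G x}" using h by simp
  qed
qed

lemma (in group) central_commutator:
  assumes fin: "finite (carrier G)" and pr: "Factorial_Ring.prime (p::nat)" and ord: "order G = p ^ n"
    and nab: "\<exists>x\<in>carrier G. \<exists>y\<in>carrier G. x \<otimes> y \<noteq> y \<otimes> x"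
  shows "\<exists>a\<in>carrier G. \<exists>b\<in>carrier G. a \<otimes> b \<otimes> inv a \<otimes> inv b \<noteq> \<one> \<and> cent G (a \<otimes> b \<otimes> inv a \<otimes> inv b)"
proof -
  define Z where "Z = {x. cent G x}"
  have nZ: "Z \<lhd> G" unfolding Z_def by (rule center_normal)
  then interpret N: normal Z G .
  have sgZ: "subgroup Z G" by (rule N.subgroup_axioms)
  interpret Q: group "G Mod Z" by (rule N.factorgroup_is_group)
  have cQ: "carrier (G Mod Z) = rcosets Z" by (simp add: FactGroup_def)
  have oneQ: "\<one>\<^bsub>G Mod Z\<^esub> = Z" by (simp add: FactGroup_def)
  have multQ: "A \<otimes>\<^bsub>G Mod Z\<^esub> B = A <#> B" for A B by (simp add: FactGroup_def)
  have finQ: "finite (carrier (G Mod Z))" unfolding cQ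
    using rcosets_part_G[OF sgZ] fin by (intro finite_UnionD) simp
  have "card (rcosets Z) * card Z = p ^ n" using lagrange[OF sgZ] ord by simp
  then have "order (G Mod Z) dvd p ^ n" unfolding order_def cQ by (rule dvdI[OF sym])
  then obtain k where k: "order (G Mod Z) = p ^ k" using divides_primepow_nat[OF pr] by blast
  have ZneG: "Z \<noteq> carrier G"
  proof
    assume "Z = carrier G"
    then have "\<forall>x\<in>carrier G. cent G x" unfolding Z_def by auto
    then show False using nab unfolding cent_def by auto
  qed
  have "carrier (G Mod Z) \<noteq> {\<one>\<^bsub>G Mod Z\<^esub>}"
  proof
    assume "carrier (G Mod Z) = {\<one>\<^bsub>G Mod Z\<^esub>}"
    then have "rcosets Z = {Z}" using cQ oneQ by simp
    then have "\<Union>(rcosets Z) = Z" by simp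
    then show False using rcosets_part_G[OF sgZ] ZneG by simp
  qed
  moreover have Qn: "carrier (G Mod Z) \<lhd> G Mod Z"
    unfolding Q.normal_inv_iff by (blast intro: Q.subgroup_self Q.m_closed Q.inv_closed)
  ultimately obtain A where A: "A \<in> carrier (G Mod Z)" "A \<noteq> Z" "cent (G Mod Z) A"
    using Q.normal_meets_center[OF finQ pr k Qn] oneQ by blast
  obtain a where a: "a \<in> carrier G" "A = Z #> a" using A(1) cQ unfolding RCOSETS_def by blast
  have "a \<notin> Z"
  proof
    assume "a \<in> Z"
    then have "Z #> a = Z" using N.rcos_const is_group by blast
    then show False using A a by simp
  qed
  then obtain b where b: "b \<in> carrier G" "b \<otimes> a \<noteq> a \<otimes> b" using a unfolding Z_def cent_def by blast
  have bQ: "Z #> b \<in> carrier (G Mod Z)" using b cQ unfolding RCOSETS_def by blast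
  have "(Z #> b) <#> (Z #> a) = (Z #> a) <#> (Z #> b)"
    using A(3) bQ a unfolding cent_def multQ by blast
  then have "Z #> (b \<otimes> a) = Z #> (a \<otimes> b)" using N.rcos_sum a b by simp
  moreover have "a \<otimes> b \<in> Z #> (a \<otimes> b)" using rcos_self[OF _ sgZ] a b by simp
  ultimately have "a \<otimes> b \<in> Z #> (b \<otimes> a)" by simp
  then have "(a \<otimes> b) \<otimes> inv (b \<otimes> a) \<in> Z" using N.rcos_module[OF is_group] a b by simp
  moreover have "(a \<otimes> b) \<otimes> inv (b \<otimes> a) = a \<otimes> b \<otimes> inv a \<otimes> inv b"
    using a b by (simp add: inv_mult_group m_assoc)
  ultimately have cz: "cent G (a \<otimes> b \<otimes> inv a \<otimes> inv b)" unfolding Z_def by simp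
  have "a \<otimes> b \<otimes> inv a \<otimes> inv b \<noteq> \<one>"
  proof
    assume "a \<otimes> b \<otimes> inv a \<otimes> inv b = \<one>"
    then have "a \<otimes> b \<otimes> inv a \<otimes> inv b \<otimes> b \<otimes> a = b \<otimes> a" using a b by simp
    then have "a \<otimes> b = b \<otimes> a" using a b by (simp add: m_assoc)
    then show False using b by simp
  qed
  then show ?thesis using cz a b by blast
qed

definition cm :: "('a, 'b) monoid_scheme \<Rightarrow> 'a \<Rightarrow> 'a \<Rightarrow> 'a" where
  "cm G g h = g \<otimes>\<^bsub>G\<^esub> h \<otimes>\<^bsub>G\<^esub> inv\<^bsub>G\<^esub> g \<otimes>\<^bsub>G\<^esub> inv\<^bsub>G\<^esub> h"

definition Sol :: "('a, 'b) monoid_scheme \<Rightarrow> 'a \<Rightarrow> ('a \<times> 'a) set" where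
  "Sol G z = {(g, h). g \<in> carrier G \<and> h \<in> carrier G \<and> cm G g h = z}"

lemma (in group) inv_cancel_left1 [simp]: "x \<in> carrier G \<Longrightarrow> y \<in> carrier G \<Longrightarrow> inv x \<otimes> (x \<otimes> y) = y"
  by (simp add: m_assoc[symmetric])

lemma (in group) inv_cancel_left2 [simp]: "x \<in> carrier G \<Longrightarrow> y \<in> carrier G \<Longrightarrow> x \<otimes> (inv x \<otimes> y) = y"
  by (simp add: m_assoc[symmetric])

lemma (in group) cm_closed [simp]: "g \<in> carrier G \<Longrightarrow> h \<in> carrier G \<Longrightarrow> cm G g h \<in> carrier G"
  unfolding cm_def by simp

lemma (in group) cm_iff:
  assumes "g \<in> carrier G" "h \<in> carrier G" "z \<in> carrier G"
  shows "cm G g h = z \<longleftrightarrow> g \<otimes> h \<otimes> inv g = z \<otimes> h"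
proof
  assume "cm G g h = z"
  then have "cm G g h \<otimes> h = z \<otimes> h" by simp
  then show "g \<otimes> h \<otimes> inv g = z \<otimes> h" using assms unfolding cm_def by (simp add: m_assoc)
next
  assume "g \<otimes> h \<otimes> inv g = z \<otimes> h"
  then have "g \<otimes> h \<otimes> inv g \<otimes> inv h = z \<otimes> h \<otimes> inv h" by simp
  then show "cm G g h = z" using assms unfolding cm_def by (simp add: m_assoc)
qed

lemma (in group) normal_commute:
  assumes H: "H \<lhd> G" and K: "K \<lhd> G" and HK: "H \<inter> K = {\<one>}" and x: "x \<in> H" and y: "y \<in> K"
  shows "x \<otimes> y = y \<otimes> x"
proof -
  interpret NH: normal H G by (rule H)
  interpret NK: normal K G by (rule K)
  have xc: "x \<in> carrier G" using x NH.subset by blast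
  have yc: "y \<in> carrier G" using y NK.subset by blast
  have "y \<otimes> inv x \<otimes> inv y \<in> H" using NH.inv_op_closed2[OF yc] x by simp
  then have t1: "x \<otimes> (y \<otimes> inv x \<otimes> inv y) \<in> H" using x by simp
  have "x \<otimes> y \<otimes> inv x \<in> K" using NK.inv_op_closed2[OF xc] y by simp
  then have t2: "x \<otimes> y \<otimes> inv x \<otimes> inv y \<in> K" using y by simp
  have "x \<otimes> (y \<otimes> inv x \<otimes> inv y) = x \<otimes> y \<otimes> inv x \<otimes> inv y" using xc yc by (simp add: m_assoc)
  then have "x \<otimes> y \<otimes> inv x \<otimes> inv y = \<one>" using t1 t2 HK by auto
  then have "x \<otimes> y \<otimes> inv x \<otimes> inv y \<otimes> y \<otimes> x = y \<otimes> x" using xc yc by simp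
  then show ?thesis using xc yc by (simp add: m_assoc)
qed

lemma (in group) normal_uniq:
  assumes H: "H \<lhd> G" and K: "K \<lhd> G" and HK: "H \<inter> K = {\<one>}"
    and x: "x \<in> H" "x' \<in> H" and y: "y \<in> K" "y' \<in> K" and eq: "x \<otimes> y = x' \<otimes> y'"
  shows "x = x' \<and> y = y'"
proof -
  interpret NH: normal H G by (rule H)
  interpret NK: normal K G by (rule K)
  have xc: "x \<in> carrier G" "x' \<in> carrier G" using x NH.subset by auto
  have yc: "y \<in> carrier G" "y' \<in> carrier G" using y NK.subset by auto
  have "inv x' \<otimes> (x \<otimes> y) \<otimes> inv y = inv x' \<otimes> (x' \<otimes> y') \<otimes> inv y" using eq by simp
  then have e: "inv x' \<otimes> x = y' \<otimes> inv y" using xc yc by (simp add: m_assoc)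
  have "inv x' \<otimes> x \<in> H" using x by simp
  moreover have "y' \<otimes> inv y \<in> K" using y by simp
  ultimately have "inv x' \<otimes> x = \<one>" "y' \<otimes> inv y = \<one>" using e HK by auto
  then show ?thesis using xc yc
    by (metis inv_closed inv_equality inv_inv l_inv r_inv)
qed

lemma (in group) cm_split:
  assumes H: "H \<lhd> G" and K: "K \<lhd> G" and HK: "H \<inter> K = {\<one>}"
    and g: "g \<in> carrier G" and h1: "h1 \<in> H" and h2: "h2 \<in> K"
  shows "cm G g (h1 \<otimes> h2) = cm G g h1 \<otimes> cm G g h2 \<and> cm G g h1 \<in> H \<and> cm G g h2 \<in> K"
proof -
  interpret NH: normal H G by (rule H)
  interpret NK: normal K G by (rule K)
  have h1c: "h1 \<in> carrier G" using h1 NH.subset by blast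
  have h2c: "h2 \<in> carrier G" using h2 NK.subset by blast
  have inH: "cm G g h1 \<in> H" unfolding cm_def using NH.inv_op_closed2[OF g h1] h1 by simp
  have inK: "cm G g h2 \<in> K" unfolding cm_def using NK.inv_op_closed2[OF g h2] h2 by simp
  have comm: "inv h1 \<otimes> cm G g h2 = cm G g h2 \<otimes> inv h1"
    using normal_commute[OF H K HK _ inK] h1 by simp
  have "cm G g h1 \<otimes> cm G g h2 = (g \<otimes> h1 \<otimes> inv g) \<otimes> (inv h1 \<otimes> cm G g h2)"
    using g h1c h2c unfolding cm_def by (simp add: m_assoc)
  also have "\<dots> = (g \<otimes> h1 \<otimes> inv g) \<otimes> (cm G g h2 \<otimes> inv h1)" by (simp only: comm)
  also have "\<dots> = cm G g (h1 \<otimes> h2)"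
    using g h1c h2c unfolding cm_def by (simp add: m_assoc inv_mult_group)
  finally show ?thesis using inH inK by simp
qed

lemma (in group) cm_shift:
  assumes g: "g \<in> carrier G" and h: "h \<in> carrier G" and k: "k \<in> carrier G"
    and c: "c \<in> carrier G" and w: "cent G w"
    and e1: "cm G g h = c \<otimes> w" and e2: "cm G g k = w"
  shows "cm G g (h \<otimes> inv k) = c"
proof -
  have wc: "w \<in> carrier G" using w unfolding cent_def by blast
  have a1: "g \<otimes> h \<otimes> inv g = c \<otimes> w \<otimes> h" using e1 cm_iff[OF g h] c wc by simp
  have a2: "g \<otimes> k \<otimes> inv g = w \<otimes> k" using e2 cm_iff[OF g k] wc by simp
  have "g \<otimes> (h \<otimes> inv k) \<otimes> inv g = (g \<otimes> h \<otimes> inv g) \<otimes> inv (g \<otimes> k \<otimes> inv g)"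
    using g h k by (simp add: m_assoc inv_mult_group)
  also have "\<dots> = c \<otimes> w \<otimes> h \<otimes> inv (w \<otimes> k)" by (simp only: a1 a2)
  also have "\<dots> = c \<otimes> (w \<otimes> (h \<otimes> inv k)) \<otimes> inv w"
    using c wc h k by (simp add: m_assoc inv_mult_group)
  also have "w \<otimes> (h \<otimes> inv k) = (h \<otimes> inv k) \<otimes> w" using w h k unfolding cent_def by simp
  also have "c \<otimes> (h \<otimes> inv k \<otimes> w) \<otimes> inv w = c \<otimes> (h \<otimes> inv k)"
    using c wc h k by (simp add: m_assoc)
  finally show ?thesis using cm_iff[OF g _ c] h k by simp
qed

lemma (in group) core:
  assumes fin: "finite (carrier G)" and H: "H \<lhd> G" and K: "K \<lhd> G" and HK: "H \<inter> K = {\<one>}"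
    and dec: "\<And>g. g \<in> carrier G \<Longrightarrow> \<exists>x\<in>H. \<exists>y\<in>K. g = x \<otimes> y"
    and a1: "a1 \<in> H" and b: "b \<in> carrier G" and cdef: "c = cm G a1 b"
    and w: "w \<in> K" "cent G w" "w \<noteq> \<one>"
  shows "card (Sol G (c \<otimes> w)) < card (Sol G c)"
proof -
  interpret NH: normal H G by (rule H)
  interpret NK: normal K G by (rule K)
  have a1c: "a1 \<in> carrier G" using a1 NH.subset by blast
  have wc: "w \<in> carrier G" using w NK.subset by blast
  have cH: "c \<in> H" unfolding cdef cm_def
  proof -
    have "b \<otimes> inv a1 \<otimes> inv b \<in> H" using NH.inv_op_closed2[OF b] a1 by simp
    then have "a1 \<otimes> (b \<otimes> inv a1 \<otimes> inv b) \<in> H" using a1 by simp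
    then show "a1 \<otimes> b \<otimes> inv a1 \<otimes> inv b \<in> H" using a1c b by (simp add: m_assoc)
  qed
  have cc: "c \<in> carrier G" using cH NH.subset by blast
  have exk: "\<exists>k\<in>K. cm G g k = w" if gh: "(g, h) \<in> Sol G (c \<otimes> w)" for g h
  proof -
    have g: "g \<in> carrier G" and hc: "h \<in> carrier G" and e: "cm G g h = c \<otimes> w"
      using gh unfolding Sol_def by auto
    obtain h1 h2 where h1: "h1 \<in> H" and h2: "h2 \<in> K" and hd: "h = h1 \<otimes> h2" using dec[OF hc] by blast
    have sp: "cm G g h = cm G g h1 \<otimes> cm G g h2" "cm G g h1 \<in> H" "cm G g h2 \<in> K"
      using cm_split[OF H K HK g h1 h2] hd by auto
    have "cm G g h2 = w" using normal_uniq[OF H K HK sp(2) cH sp(3) w(1)] sp(1) e by simp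
    then show ?thesis using h2 by blast
  qed
  define kk where "kk = (\<lambda>g. SOME k. k \<in> K \<and> cm G g k = w)"
  have kk: "kk g \<in> K \<and> cm G g (kk g) = w" if "(g, h) \<in> Sol G (c \<otimes> w)" for g h
  proof -
    have "\<exists>k. k \<in> K \<and> cm G g k = w" using exk[OF that] by blast
    then show ?thesis unfolding kk_def by (rule someI_ex)
  qed
  define f where "f = (\<lambda>(g, h). (g, h \<otimes> inv (kk g)))"
  have fS: "f ` Sol G (c \<otimes> w) \<subseteq> Sol G c"
  proof
    fix q assume "q \<in> f ` Sol G (c \<otimes> w)"
    then obtain g h where gh: "(g, h) \<in> Sol G (c \<otimes> w)" and q: "q = f (g, h)" by auto
    have g: "g \<in> carrier G" and hc: "h \<in> carrier G" and e: "cm G g h = c \<otimes> w"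
      using gh unfolding Sol_def by auto
    have kkc: "kk g \<in> carrier G" using kk[OF gh] NK.subset by blast
    have "cm G g (h \<otimes> inv (kk g)) = c" using cm_shift[OF g hc kkc cc w(2) e] kk[OF gh] by blast
    then show "q \<in> Sol G c" unfolding q f_def Sol_def using g hc kkc by simp
  qed
  have inj: "inj_on f (Sol G (c \<otimes> w))"
  proof (rule inj_onI)
    fix q q' assume q: "q \<in> Sol G (c \<otimes> w)" and q': "q' \<in> Sol G (c \<otimes> w)" and eq: "f q = f q'"
    obtain g h where gh: "q = (g, h)" by (cases q)
    obtain g' h' where gh': "q' = (g', h')" by (cases q')
    have gg: "g = g'" and hh: "h \<otimes> inv (kk g) = h' \<otimes> inv (kk g)" using eq unfolding gh gh' f_def by auto
    have hc: "h \<in> carrier G" using q gh unfolding Sol_def by auto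
    have hc': "h' \<in> carrier G" using q' gh' unfolding Sol_def by auto
    have kkc: "kk g \<in> carrier G" using kk[of g h] q gh NK.subset by blast
    have "h = h'" using hh hc hc' kkc by simp
    then show "q = q'" using gh gh' gg by simp
  qed
  have notin: "(a1, b) \<notin> f ` Sol G (c \<otimes> w)"
  proof
    assume "(a1, b) \<in> f ` Sol G (c \<otimes> w)"
    then obtain g h where gh: "(g, h) \<in> Sol G (c \<otimes> w)" and q: "(a1, b) = f (g, h)" by auto
    have "g = a1" using q unfolding f_def by simp
    then have k: "kk a1 \<in> K" "cm G a1 (kk a1) = w" using kk[OF gh] by auto
    have kc: "kk a1 \<in> carrier G" using k(1) NK.subset by blast
    have "a1 \<otimes> kk a1 = kk a1 \<otimes> a1" using normal_commute[OF H K HK a1 k(1)] .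
    then have "cm G a1 (kk a1) = \<one>" unfolding cm_def using a1c kc by (simp add: m_assoc)
    then show False using k w(3) by simp
  qed
  have ab: "(a1, b) \<in> Sol G c" unfolding Sol_def cdef using a1c b by simp
  have finS: "finite (Sol G c)"
    by (rule finite_subset[of _ "carrier G \<times> carrier G"]) (auto simp: Sol_def fin)
  have "f ` Sol G (c \<otimes> w) \<subset> Sol G c" using fS notin ab by blast
  then have "card (f ` Sol G (c \<otimes> w)) < card (Sol G c)" using finS psubset_card_mono by blast
  then show ?thesis using card_image[OF inj] by simp
qed

lemma (in group) cent_set_conj:
  assumes S: "S \<subseteq> {x. cent G x}" and g: "g \<in> carrier G"
  shows "g <# S #> inv g = S"
proof -
  have "g <# S #> inv g = (\<lambda>x. g \<otimes> x \<otimes> inv g) ` S" unfolding l_coset_def r_coset_def by auto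
  also have "\<dots> = S" using S cent_conj[OF _ g] by (auto simp: image_iff) (metis mem_Collect_eq subsetD)
  finally show ?thesis .
qed

lemma (in group) normalizer_cent:
  assumes S: "S \<subseteq> {x. cent G x}"
  shows "normalizer G S = carrier G"
proof -
  have Sc: "S \<subseteq> carrier G" using S unfolding cent_def by auto
  show ?thesis unfolding normalizer_def stabilizer_def using Sc cent_set_conj[OF S] by auto
qed

lemma (in group) hom_facts:
  assumes f: "f \<in> carrier G \<rightarrow> carrier G" and m: "\<And>x y. x \<in> carrier G \<Longrightarrow> y \<in> carrier G \<Longrightarrow> f (x \<otimes> y) = f x \<otimes> f y"
  shows "f \<one> = \<one>" "\<And>x. x \<in> carrier G \<Longrightarrow> f (inv x) = inv (f x)"
proof -
  have o: "f \<one> \<in> carrier G" using f by blast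
  have "f \<one> \<otimes> f \<one> = f \<one> \<otimes> \<one>" using m[of \<one> \<one>] o by simp
  then show one: "f \<one> = \<one>" using o by (metis l_cancel one_closed)
  fix x assume x: "x \<in> carrier G"
  have fx: "f x \<in> carrier G" "f (inv x) \<in> carrier G" using f x by auto
  have "f (inv x) \<otimes> f x = \<one>" using m[of "inv x" x] x one by simp
  then show "f (inv x) = inv (f x)" using fx by (simp add: inv_equality)
qed

lemma (in group) sol_card_le:
  assumes fin: "finite (carrier G)" and f: "f \<in> carrier G \<rightarrow> carrier G"
    and m: "\<And>x y. x \<in> carrier G \<Longrightarrow> y \<in> carrier G \<Longrightarrow> f (x \<otimes> y) = f x \<otimes> f y"
    and inj: "inj_on f (carrier G)"
  shows "card (Sol G z) \<le> card (Sol G (f z))"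
proof -
  have fi: "\<And>x. x \<in> carrier G \<Longrightarrow> f (inv x) = inv (f x)" using hom_facts[OF f m] by blast
  have fc: "\<And>x. x \<in> carrier G \<Longrightarrow> f x \<in> carrier G" using f by blast
  have cmf: "cm G (f g) (f h) = f (cm G g h)" if "g \<in> carrier G" "h \<in> carrier G" for g h
    using that unfolding cm_def by (simp add: m fi fc)
  let ?F = "\<lambda>(g, h). (f g, f h)"
  have "?F ` Sol G z \<subseteq> Sol G (f z)" unfolding Sol_def using cmf fc by auto
  moreover have "inj_on ?F (Sol G z)" using inj unfolding inj_on_def Sol_def by auto
  moreover have "finite (Sol G (f z))"
    by (rule finite_subset[of _ "carrier G \<times> carrier G"]) (auto simp: Sol_def fin)
  ultimately show ?thesis by (metis card_image card_mono)
qed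

lemma fusion_aut:
  fixes G (structure)
  assumes pg: "p_group p G" and sat: "saturated p G F" and tr: "transitive_fusion G F"
    and z: "cent G z" "z \<noteq> \<one>\<^bsub>G\<^esub>" and z': "cent G z'" "z' \<noteq> \<one>\<^bsub>G\<^esub>"
  shows "\<exists>\<psi>. \<psi> \<in> carrier G \<rightarrow> carrier G \<and> (\<forall>x\<in>carrier G. \<forall>y\<in>carrier G. \<psi> (x \<otimes>\<^bsub>G\<^esub> y) = \<psi> x \<otimes>\<^bsub>G\<^esub> \<psi> y)
      \<and> inj_on \<psi> (carrier G) \<and> \<psi> z = z'"
proof -
  interpret group G using pg unfolding p_group_def by blast
  have fin: "finite (carrier G)" using pg unfolding p_group_def by blast
  have zc: "z \<in> carrier G" and z'c: "z' \<in> carrier G" using z z' unfolding cent_def by auto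
  have fs: "fusion_system G F" using sat unfolding saturated_def by blast
  define Zs where "Zs = {x. cent G x}"
  have sgZ: "subgroup Zs G" unfolding Zs_def using center_normal normal_imp_subgroup by blast
  define P where "P = generate G {z}"
  have sgP: "subgroup P G" unfolding P_def using generate_is_subgroup zc by simp
  have PZ: "P \<subseteq> Zs" unfolding P_def using generate_subgroup_incl[OF _ sgZ] z unfolding Zs_def by simp
  obtain \<phi> where phi: "\<phi> \<in> F P (carrier G)" and phiz: "\<phi> z = z'"
    using tr zc z'c z(2) z'(2) unfolding transitive_fusion_def P_def by blast
  have sgG: "subgroup (carrier G) G" by (rule subgroup_self)
  have fs2: "F P (carrier G) \<subseteq> InjHom G P (carrier G) \<and> HomS G P (carrier G) \<subseteq> F P (carrier G) \<and>
         (\<forall>\<phi>\<in>F P (carrier G). \<phi> \<in> F P (\<phi> ` P) \<and> restrict (inv_into P \<phi>) (\<phi> ` P) \<in> F (\<phi> ` P) P)"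
    using fs sgP sgG unfolding fusion_system_def by blast
  have phiI: "\<phi> \<in> InjHom G P (carrier G)" using fs2 phi by blast
  have "\<phi> \<in> F P (\<phi> ` P)" using fs2 phi by blast
  then have sgPP: "subgroup (\<phi> ` P) G" using fs unfolding fusion_system_def by blast
  have hom: "\<phi> \<in> hom (G\<lparr>carrier := P\<rparr>) (G\<lparr>carrier := carrier G\<rparr>)" using phiI unfolding InjHom_def by blast
  have phic: "\<phi> x \<in> carrier G" if "x \<in> P" for x using hom that unfolding hom_def by auto
  have phim: "\<phi> (x \<otimes> y) = \<phi> x \<otimes> \<phi> y" if "x \<in> P" "y \<in> P" for x y
    using hom that unfolding hom_def by auto
  have Pc: "P \<subseteq> carrier G" using sgP subgroup.subset by blast
  have one: "\<one> \<in> P" using sgP subgroup.one_closed by blast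
  have phi1: "\<phi> \<one> = \<one>"
  proof -
    have "\<phi> \<one> \<otimes> \<phi> \<one> = \<phi> \<one> \<otimes> \<one>" using phim[OF one one] phic[OF one] by simp
    then show ?thesis using phic[OF one] by (metis l_cancel one_closed)
  qed
  have cphi: "cent G (\<phi> y)" if "y \<in> P" for y
    using that unfolding P_def
  proof (induction rule: generate.induct)
    case one
    then show ?case using phi1 by (simp add: cent_def)
  next
    case (incl h)
    then show ?case using phiz z' by simp
  next
    case (inv h)
    then have h: "h = z" by simp
    have iz: "inv z \<in> P" unfolding P_def by (rule generate.inv) simp
    have zP: "z \<in> P" unfolding P_def by (rule generate.incl) simp
    have "\<phi> (inv z) \<otimes> \<phi> z = \<one>" using phim[OF iz zP] zc phi1 by simp
    then have "\<phi> (inv z) = inv z'" using phic[OF iz] z'c phiz by (simp add: inv_equality)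
    moreover have "inv z' \<in> Zs" using subgroup.m_inv_closed[OF sgZ, of z'] z' unfolding Zs_def by simp
    ultimately show ?case using h unfolding Zs_def by simp
  next
    case (eng h1 h2)
    have "h1 \<in> P" "h2 \<in> P" using eng.hyps unfolding P_def by auto
    then have "\<phi> (h1 \<otimes> h2) = \<phi> h1 \<otimes> \<phi> h2" using phim by blast
    moreover have "\<phi> h1 \<otimes> \<phi> h2 \<in> Zs" using subgroup.m_closed[OF sgZ, of "\<phi> h1" "\<phi> h2"] eng.IH unfolding Zs_def by simp
    ultimately show ?case unfolding Zs_def by simp
  qed
  have PPZ: "\<phi> ` P \<subseteq> Zs" using cphi unfolding Zs_def by blast
  have CPP: "centralizer_set G (\<phi> ` P) = carrier G"
    unfolding centralizer_set_def using cphi unfolding cent_def by auto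
  have fc: "fully_centralized G F (\<phi> ` P)"
    unfolding fully_centralized_def
  proof (intro conjI allI impI sgPP)
    fix Q
    have "centralizer_set G Q \<subseteq> carrier G" unfolding centralizer_set_def by auto
    then show "card (centralizer_set G Q) \<le> card (centralizer_set G (\<phi> ` P))"
      unfolding CPP using fin card_mono by blast
  qed
  obtain \<psi> where psi: "\<psi> \<in> F (N_phi G P \<phi>) (carrier G)" and psix: "\<forall>x\<in>P. \<psi> x = \<phi> x"
    using sat sgP phi fc unfolding saturated_def by blast
  have NP: "normalizer G P = carrier G" using normalizer_cent PZ unfolding Zs_def by blast
  have NPP: "normalizer G (\<phi> ` P) = carrier G" using normalizer_cent PPZ unfolding Zs_def by blast
  have "N_phi G P \<phi> = carrier G"
  proof
    show "N_phi G P \<phi> \<subseteq> carrier G" unfolding N_phi_def NP by auto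
    show "carrier G \<subseteq> N_phi G P \<phi>"
    proof
      fix g assume g: "g \<in> carrier G"
      have "\<forall>x\<in>P. \<phi> (g \<otimes> x \<otimes> inv g) = \<one> \<otimes> \<phi> x \<otimes> inv \<one>"
      proof
        fix x assume x: "x \<in> P"
        have "g \<otimes> x \<otimes> inv g = x" using cent_conj[OF _ g] x PZ unfolding Zs_def by blast
        then show "\<phi> (g \<otimes> x \<otimes> inv g) = \<one> \<otimes> \<phi> x \<otimes> inv \<one>" using phic[OF x] by simp
      qed
      then show "g \<in> N_phi G P \<phi>" unfolding N_phi_def NP NPP using g by blast
    qed
  qed
  then have "\<psi> \<in> F (carrier G) (carrier G)" using psi by simp
  moreover have "F (carrier G) (carrier G) \<subseteq> InjHom G (carrier G) (carrier G)"
    using fs sgG unfolding fusion_system_def by blast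
  ultimately have "\<psi> \<in> InjHom G (carrier G) (carrier G)" by blast
  then have ph: "\<psi> \<in> hom (G\<lparr>carrier := carrier G\<rparr>) (G\<lparr>carrier := carrier G\<rparr>)" and pin: "inj_on \<psi> (carrier G)"
    unfolding InjHom_def by auto
  have "z \<in> P" unfolding P_def by (rule generate.incl) simp
  then have "\<psi> z = z'" using psix phiz by simp
  moreover have "\<psi> \<in> carrier G \<rightarrow> carrier G" using ph unfolding hom_def by simp
  moreover have "\<forall>x\<in>carrier G. \<forall>y\<in>carrier G. \<psi> (x \<otimes> y) = \<psi> x \<otimes> \<psi> y" using ph unfolding hom_def by simp
  ultimately show ?thesis using pin by blast
qed

lemma (in group) cent_mult: "cent G a \<Longrightarrow> cent G b \<Longrightarrow> cent G (a \<otimes> b)"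
  using center_normal normal_imp_subgroup subgroup.m_closed[of "{x. cent G x}" G a b] by blast

lemma (in group) cm_inv: "a \<in> carrier G \<Longrightarrow> b \<in> carrier G \<Longrightarrow> inv (cm G a b) = cm G b a"
  unfolding cm_def by (simp add: inv_mult_group m_assoc)

lemma (in group) cent_split:
  assumes H: "H \<lhd> G" and K: "K \<lhd> G" and HK: "H \<inter> K = {\<one>}"
    and v: "v \<in> H" and u: "u \<in> K" and c: "cent G (v \<otimes> u)"
  shows "cent G v"
  unfolding cent_def
proof (intro conjI ballI)
  interpret NH: normal H G by (rule H)
  interpret NK: normal K G by (rule K)
  have vc: "v \<in> carrier G" using v NH.subset by blast
  have uc: "u \<in> carrier G" using u NK.subset by blast
  show "v \<in> carrier G" by (rule vc)
  fix g assume g: "g \<in> carrier G"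
  have "(g \<otimes> v \<otimes> inv g) \<otimes> (g \<otimes> u \<otimes> inv g) = g \<otimes> (v \<otimes> u) \<otimes> inv g"
    using g vc uc by (simp add: m_assoc)
  also have "\<dots> = v \<otimes> u" using cent_conj[OF c g] .
  finally have "g \<otimes> v \<otimes> inv g = v"
    using normal_uniq[OF H K HK NH.inv_op_closed2[OF g v] v NK.inv_op_closed2[OF g u] u] by blast
  then have "g \<otimes> v \<otimes> inv g \<otimes> g = v \<otimes> g" by simp
  then show "g \<otimes> v = v \<otimes> g" using g vc by (simp add: m_assoc)
qed

lemma contra_case:
  fixes G (structure)
  assumes pr: "Factorial_Ring.prime p" and pg: "p_group p G" and sat: "saturated p G F" and tr: "transitive_fusion G F"
    and H: "H \<lhd> G" and K: "K \<lhd> G" and HK: "H \<inter> K = {\<one>}" and Kn: "K \<noteq> {\<one>}"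
    and dec: "\<And>g. g \<in> carrier G \<Longrightarrow> \<exists>x\<in>H. \<exists>y\<in>K. g = x \<otimes> y"
    and a1: "a1 \<in> H" and b: "b \<in> carrier G" and cv: "cent G (cm G a1 b)" and v1: "cm G a1 b \<noteq> \<one>"
  shows False
proof -
  interpret group G using pg unfolding p_group_def by blast
  have fin: "finite (carrier G)" using pg unfolding p_group_def by blast
  obtain n where ord: "order G = p ^ n" using pg unfolding p_group_def order_def by blast
  interpret NK: normal K G by (rule K)
  interpret NH: normal H G by (rule H)
  define v where "v = cm G a1 b"
  obtain w where w: "w \<in> K" "w \<noteq> \<one>" "cent G w" using normal_meets_center[OF fin pr ord K Kn] by blast
  have lt: "card (Sol G (v \<otimes> w)) < card (Sol G v)"
    using core[OF fin H K HK dec a1 b v_def w(1) w(3) w(2)] by blast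
  have vH: "v \<in> H"
  proof -
    have "inv (cm G b a1) \<in> H" using NH.inv_op_closed2[OF b a1] a1 unfolding cm_def by simp
    then show ?thesis unfolding v_def using cm_inv[OF b] a1 NH.subset by auto
  qed
  have vw: "cent G (v \<otimes> w)" using cent_mult cv w(3) unfolding v_def by blast
  have vw1: "v \<otimes> w \<noteq> \<one>"
  proof
    assume e: "v \<otimes> w = \<one>"
    have "inv w = v" using inv_equality[OF e] vH NH.subset w(1) NK.subset by blast
    then have "v \<in> K" using w(1) by (metis NK.m_inv_closed)
    then have "v = \<one>" using vH HK by blast
    then show False using v1 unfolding v_def by simp
  qed
  obtain \<psi> where f: "\<psi> \<in> carrier G \<rightarrow> carrier G"
    and m: "\<forall>x\<in>carrier G. \<forall>y\<in>carrier G. \<psi> (x \<otimes> y) = \<psi> x \<otimes> \<psi> y"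
    and inj: "inj_on \<psi> (carrier G)" and pv: "\<psi> v = v \<otimes> w"
    using fusion_aut[OF pg sat tr cv[folded v_def] v1[folded v_def] vw vw1] by blast
  have "card (Sol G v) \<le> card (Sol G (\<psi> v))" using sol_card_le[OF fin f _ inj] m by blast
  then show False using lt pv by simp
qed

lemma main_aux:
  fixes G (structure)
  assumes "Factorial_Ring.prime p"
    and "p_group p G"
    and "\<exists>x\<in>carrier G. \<exists>y\<in>carrier G. x \<otimes>\<^bsub>G\<^esub> y \<noteq> y \<otimes>\<^bsub>G\<^esub> x"
    and "saturated p G F"
    and "transitive_fusion G F"
  shows "\<not> nontrivially_decomposable G"
proof
  assume "nontrivially_decomposable G"
  then obtain H K where H: "H \<lhd> G" and K: "K \<lhd> G" and Hn: "H \<noteq> {\<one>\<^bsub>G\<^esub>}" and Kn: "K \<noteq> {\<one>\<^bsub>G\<^esub>}"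
    and HK: "H \<inter> K = {\<one>\<^bsub>G\<^esub>}" and HKG: "H <#>\<^bsub>G\<^esub> K = carrier G"
    unfolding nontrivially_decomposable_def by blast
  interpret group G using assms(2) unfolding p_group_def by blast
  have fin: "finite (carrier G)" using assms(2) unfolding p_group_def by blast
  obtain n where ord: "order G = p ^ n" using assms(2) unfolding p_group_def order_def by blast
  interpret NK: normal K G by (rule K)
  interpret NH: normal H G by (rule H)
  have KH: "K \<inter> H = {\<one>}" using HK by blast
  have dec: "\<exists>x\<in>H. \<exists>y\<in>K. g = x \<otimes> y" if "g \<in> carrier G" for g
    using that HKG unfolding set_mult_def by blast
  have dec': "\<exists>x\<in>K. \<exists>y\<in>H. g = x \<otimes> y" if gc: "g \<in> carrier G" for g
  proof -
    obtain x y where "x \<in> H" "y \<in> K" "g = x \<otimes> y" using dec[OF gc] by blast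
    then show ?thesis using normal_commute[OF H K HK] by metis
  qed
  obtain a b where a: "a \<in> carrier G" and b: "b \<in> carrier G"
    and c1: "a \<otimes> b \<otimes> inv a \<otimes> inv b \<noteq> \<one>" and cc: "cent G (a \<otimes> b \<otimes> inv a \<otimes> inv b)"
    using central_commutator[OF fin assms(1) ord assms(3)] by blast
  obtain a1 a2 where a1: "a1 \<in> H" and a2: "a2 \<in> K" and ad: "a = a1 \<otimes> a2" using dec[OF a] by blast
  have a1c: "a1 \<in> carrier G" using a1 NH.subset by blast
  have a2c: "a2 \<in> carrier G" using a2 NK.subset by blast
  have sp: "cm G b (a1 \<otimes> a2) = cm G b a1 \<otimes> cm G b a2" "cm G b a1 \<in> H" "cm G b a2 \<in> K"
    using cm_split[OF H K HK b a1 a2] by auto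
  have "cm G a b = inv (cm G b a)" using cm_inv[OF b a] by simp
  also have "\<dots> = inv (cm G b a2) \<otimes> inv (cm G b a1)" unfolding ad sp(1)
    using sp b a1c a2c by (simp add: inv_mult_group)
  also have "\<dots> = cm G a2 b \<otimes> cm G a1 b" using cm_inv b a1c a2c by simp
  also have "\<dots> = cm G a1 b \<otimes> cm G a2 b"
  proof -
    have "cm G a1 b \<in> H" using sp(2) cm_inv[OF b a1c] by (metis NH.m_inv_closed)
    moreover have "cm G a2 b \<in> K" using sp(3) cm_inv[OF b a2c] by (metis NK.m_inv_closed)
    ultimately show ?thesis using normal_commute[OF H K HK] by metis
  qed
  finally have cd: "cm G a b = cm G a1 b \<otimes> cm G a2 b" .
  have vH: "cm G a1 b \<in> H" using sp(2) cm_inv[OF b a1c] by (metis NH.m_inv_closed)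
  have uK: "cm G a2 b \<in> K" using sp(3) cm_inv[OF b a2c] by (metis NK.m_inv_closed)
  have ccm: "cent G (cm G a b)" using cc unfolding cm_def .
  have cv: "cent G (cm G a1 b)" using cent_split[OF H K HK vH uK] ccm cd by simp
  have cu: "cent G (cm G a2 b)"
  proof -
    have "cm G a1 b \<otimes> cm G a2 b = cm G a2 b \<otimes> cm G a1 b" using normal_commute[OF H K HK vH uK] .
    then show ?thesis using cent_split[OF K H KH uK vH] ccm cd by simp
  qed
  show False
  proof (cases "cm G a1 b = \<one>")
    case False
    show False using contra_case[OF assms(1,2,4,5) H K HK Kn dec a1 b cv False] .
  next
    case True
    then have "cm G a2 b \<noteq> \<one>" using c1 cd unfolding cm_def using a2c b by simp
    then show False using contra_case[OF assms(1,2,4,5) K H KH Hn dec' a2 b cu] by blast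
  qed
qed

theorem proposition2p2:
  fixes G :: "('a, 'b) monoid_scheme" and p :: nat
    and F :: "'a set \<Rightarrow> 'a set \<Rightarrow> ('a \<Rightarrow> 'a) set"
  assumes "Factorial_Ring.prime p"
    and "p_group p G"
    and "\<exists>x\<in>carrier G. \<exists>y\<in>carrier G. x \<otimes>\<^bsub>G\<^esub> y \<noteq> y \<otimes>\<^bsub>G\<^esub> x"
    and "saturated p G F"
    and "transitive_fusion G F"
  shows "\<not> nontrivially_decomposable G"
  using main_aux[OF assms] .

end
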